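(* Let $G$ be a finite group and suppose $G$ has a subgroup $H$ admitting a nontrivial homomorphism $\phi: H \to \{\pm 1\}$. Then there is a function $f: G \to \{\pm 1\}$ with $\mathbb{E}_{x\in G} f(x) = 0$ and \[ \Pr_{x,y}\,[f(x)f(y) = f(xy)] \ge \frac{1}{2}\left(1 + \frac{1}{2}\frac{|H|}{|G|}\left(1 - \frac{|N(H)|}{|G|}\right) + \frac{|H|^2}{|G|^2}\right), \] where $x,y$ are chosen uniformly and independently from $G$ and $N(H) = \{c \in G : cHc^{-1} = H\}$ is the normalizer of $H$ in $G$.
   Context: $\mathbb{E}$ denotes the average over the uniform distribution on $G$. *)

theory Defs
  imports Complex_Main "HOL-Algebra.Group_Action"
begin

end

theory Submission
  imports Defs
begin

locale thm3 = group G for G (structure) +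
  fixes H :: "'a set" and \<phi> :: "'a \<Rightarrow> int"
  assumes fin: "finite (carrier G)" and sub: "subgroup H G"
    and phival: "\<forall>h\<in>H. \<phi> h \<in> {1, -1}"
    and phihom: "\<forall>h1\<in>H. \<forall>h2\<in>H. \<phi> (h1 \<otimes> h2) = \<phi> h1 * \<phi> h2"
    and nontriv: "\<exists>h\<in>H. \<phi> h \<noteq> 1"
begin

lemma Hc: "h \<in> H \<Longrightarrow> h \<in> carrier G" using subgroup.subset[OF sub] by blast
lemma Hm: "a \<in> H \<Longrightarrow> b \<in> H \<Longrightarrow> a \<otimes> b \<in> H" by (rule subgroup.m_closed[OF sub])
lemma Hi: "a \<in> H \<Longrightarrow> inv a \<in> H" by (rule subgroup.m_inv_closed[OF sub])
lemma H1: "\<one> \<in> H" by (rule subgroup.one_closed[OF sub])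
lemma Hinv_iff: "a \<in> carrier G \<Longrightarrow> inv a \<in> H \<longleftrightarrow> a \<in> H"
  using Hi[of "inv a"] Hi[of a] by auto
lemma Hfin: "finite H" using finite_subset[OF subgroup.subset[OF sub] fin] .

lemma phi_pm: "h \<in> H \<Longrightarrow> \<phi> h = 1 \<or> \<phi> h = -1" using phival by auto
lemma phim: "a \<in> H \<Longrightarrow> b \<in> H \<Longrightarrow> \<phi> (a \<otimes> b) = \<phi> a * \<phi> b" using phihom by auto
lemma phi1: "\<phi> \<one> = 1"
proof -
  have "\<phi> \<one> = \<phi> \<one> * \<phi> \<one>" using phim[OF H1 H1] by simp
  thus ?thesis using phi_pm[OF H1] by auto
qed

lemma lcanc: "a \<in> carrier G \<Longrightarrow> b \<in> carrier G \<Longrightarrow> inv a \<otimes> (a \<otimes> b) = b"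
  by (simp add: m_assoc[symmetric])

lemma coset_left:
  assumes h: "h \<in> H" and z: "z \<in> carrier G" and g: "g \<in> carrier G"
  shows "(h \<otimes> z \<otimes> inv g \<in> H) \<longleftrightarrow> (z \<otimes> inv g \<in> H)"
proof -
  have e: "h \<otimes> z \<otimes> inv g = h \<otimes> (z \<otimes> inv g)" using h z g Hc by (simp add: m_assoc)
  show ?thesis
  proof
    assume "h \<otimes> z \<otimes> inv g \<in> H"
    hence "inv h \<otimes> (h \<otimes> (z \<otimes> inv g)) \<in> H" using Hm Hi h e by simp
    thus "z \<otimes> inv g \<in> H" using h z g Hc lcanc by simp
  next
    assume "z \<otimes> inv g \<in> H"
    thus "h \<otimes> z \<otimes> inv g \<in> H" using Hm h e by simp
  qed
qed


lemma rcanc: "a \<in> carrier G \<Longrightarrow> b \<in> carrier G \<Longrightarrow> a \<otimes> (inv a \<otimes> b) = b"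
  by (simp add: m_assoc[symmetric])

definition FF :: "('a \<Rightarrow> int) set" where
  "FF = {f \<in> carrier G \<rightarrow>\<^sub>E {1,-1}. f \<one> = 1 \<and> (\<forall>h\<in>H. \<forall>z\<in>carrier G. f (h \<otimes> z) = \<phi> h * f z)}"

definition flip :: "'a \<Rightarrow> ('a \<Rightarrow> int) \<Rightarrow> 'a \<Rightarrow> int" where
  "flip g f = (\<lambda>z. if z \<in> carrier G \<and> z \<otimes> inv g \<in> H then - f z else f z)"

lemma FF_fin: "finite FF"
proof -
  have "FF \<subseteq> carrier G \<rightarrow>\<^sub>E {1,-1}" unfolding FF_def by blast
  moreover have "finite (carrier G \<rightarrow>\<^sub>E ({1,-1}::int set))" using fin by (intro finite_PiE) auto
  ultimately show ?thesis using finite_subset by blast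
qed

lemma FF_val: "f \<in> FF \<Longrightarrow> z \<in> carrier G \<Longrightarrow> f z = 1 \<or> f z = -1"
  unfolding FF_def by (auto simp: PiE_iff)

lemma FF_one: "f \<in> FF \<Longrightarrow> f \<one> = 1"
  unfolding FF_def by auto

lemma FF_mul: "f \<in> FF \<Longrightarrow> h \<in> H \<Longrightarrow> z \<in> carrier G \<Longrightarrow> f (h \<otimes> z) = \<phi> h * f z"
  unfolding FF_def by auto

lemma FF_H: "f \<in> FF \<Longrightarrow> h \<in> H \<Longrightarrow> f h = \<phi> h"
  using FF_mul[of f h \<one>] FF_one[of f] Hc[of h] by simp

lemma flip_FF:
  assumes f: "f \<in> FF" and g: "g \<in> carrier G" "g \<notin> H"
  shows "flip g f \<in> FF"
proof -
  have ext: "f \<in> extensional (carrier G)" using f unfolding FF_def by (auto simp: PiE_iff)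
  have 1: "flip g f \<in> carrier G \<rightarrow>\<^sub>E {1,-1}"
    using FF_val[OF f] ext unfolding flip_def PiE_iff extensional_def by auto
  have "\<one> \<otimes> inv g \<notin> H" using g Hinv_iff[of g] by simp
  hence 2: "flip g f \<one> = 1" using FF_one[OF f] unfolding flip_def by simp
  have 3: "flip g f (h \<otimes> z) = \<phi> h * flip g f z" if h: "h \<in> H" and z: "z \<in> carrier G" for h z
    using coset_left[OF h z g(1)] FF_mul[OF f h z] h z Hc[OF h] unfolding flip_def by auto
  show ?thesis using 1 2 3 unfolding FF_def by blast
qed

lemma flip_flip: "flip g (flip g f) = f"
  unfolding flip_def by auto

lemma flip_toggle:
  assumes f: "f \<in> FF" and x: "x \<in> carrier G" and y: "y \<in> carrier G" and g: "g \<in> carrier G"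
    and odd: "(x \<otimes> inv g \<in> H) = ((y \<otimes> inv g \<in> H) = (x \<otimes> y \<otimes> inv g \<in> H))"
  shows "(flip g f x * flip g f y = flip g f (x \<otimes> y)) \<longleftrightarrow> \<not> (f x * f y = f (x \<otimes> y))"
proof -
  have xy: "x \<otimes> y \<in> carrier G" using x y by simp
  show ?thesis using FF_val[OF f x] FF_val[OF f y] FF_val[OF f xy] odd x y xy
    unfolding flip_def by (cases "x \<otimes> inv g \<in> H"; cases "y \<otimes> inv g \<in> H"; auto)
qed

lemma half:
  assumes x: "x \<in> carrier G" and y: "y \<in> carrier G" and g: "g \<in> carrier G" "g \<notin> H"
    and odd: "(x \<otimes> inv g \<in> H) = ((y \<otimes> inv g \<in> H) = (x \<otimes> y \<otimes> inv g \<in> H))"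
  shows "2 * card {f \<in> FF. f x * f y = f (x \<otimes> y)} = card FF"
proof -
  define A where "A = {f \<in> FF. f x * f y = f (x \<otimes> y)}"
  define B where "B = {f \<in> FF. \<not> (f x * f y = f (x \<otimes> y))}"
  have bij: "bij_betw (flip g) A B"
  proof (rule bij_betw_byWitness[where f'="flip g"])
    show "\<forall>a\<in>A. flip g (flip g a) = a" by (simp add: flip_flip)
    show "\<forall>a\<in>B. flip g (flip g a) = a" by (simp add: flip_flip)
    show "flip g ` A \<subseteq> B" unfolding A_def B_def
      using flip_FF[OF _ g] flip_toggle[OF _ x y g(1) odd] by auto
    show "flip g ` B \<subseteq> A" unfolding A_def B_def
      using flip_FF[OF _ g] flip_toggle[OF _ x y g(1) odd] by auto
  qed
  hence "card A = card B" by (rule bij_betw_same_card)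
  moreover have "card FF = card A + card B"
  proof -
    have "FF = A \<union> B" "A \<inter> B = {}" unfolding A_def B_def by auto
    moreover have "finite A" "finite B" using FF_fin unfolding A_def B_def by auto
    ultimately show ?thesis by (simp add: card_Un_disjoint)
  qed
  ultimately show ?thesis unfolding A_def by simp
qed


lemma caseH:
  assumes x: "x \<in> H" and y: "y \<in> carrier G"
  shows "card {f \<in> FF. f x * f y = f (x \<otimes> y)} = card FF"
proof -
  have "{f \<in> FF. f x * f y = f (x \<otimes> y)} = FF"
    using FF_H[OF _ x] FF_mul[OF _ x y] by auto
  thus ?thesis by simp
qed

lemma conj_eq: "x \<in> carrier G \<Longrightarrow> y \<in> carrier G \<Longrightarrow> x \<otimes> y = (x \<otimes> y \<otimes> inv x) \<otimes> x"
  by (simp add: m_assoc)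

lemma caseA:
  assumes x: "x \<in> carrier G" and y: "y \<in> H" and k: "x \<otimes> y \<otimes> inv x \<in> H"
  shows "card {f \<in> FF. f x * f y = f (x \<otimes> y)} = (if \<phi> y = \<phi> (x \<otimes> y \<otimes> inv x) then card FF else 0)"
proof -
  have yc: "y \<in> carrier G" using Hc y by simp
  have e: "f (x \<otimes> y) = \<phi> (x \<otimes> y \<otimes> inv x) * f x" if f: "f \<in> FF" for f
    using FF_mul[OF f k x] conj_eq[OF x yc] by simp
  have "(f x * f y = f (x \<otimes> y)) \<longleftrightarrow> \<phi> y = \<phi> (x \<otimes> y \<otimes> inv x)" if f: "f \<in> FF" for f
    using e[OF f] FF_H[OF f y] FF_val[OF f x] by auto
  hence "{f \<in> FF. f x * f y = f (x \<otimes> y)} = (if \<phi> y = \<phi> (x \<otimes> y \<otimes> inv x) then FF else {})"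
    by auto
  thus ?thesis by simp
qed

lemma caseR:
  assumes x: "x \<in> carrier G" "x \<notin> H" and y: "y \<in> carrier G"
    and nA: "\<not> (y \<in> H \<and> x \<otimes> y \<otimes> inv x \<in> H)"
    and nB: "\<not> (x \<otimes> y \<in> H \<and> y \<otimes> inv x \<in> H)"
  shows "2 * card {f \<in> FF. f x * f y = f (x \<otimes> y)} = card FF"
proof -
  have xy: "x \<otimes> y \<in> carrier G" using x y by simp
  show ?thesis
  proof (cases "y \<otimes> inv x \<in> H")
    case False
    show ?thesis
    proof (cases "x \<otimes> y \<otimes> inv x \<in> H")
      case False
      show ?thesis
        by (rule half[OF x(1) y x(1) x(2)]) (use \<open>y \<otimes> inv x \<notin> H\<close> False H1 x in simp)
    next
      case True
      hence yH: "y \<notin> H" using nA by blast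
      have "x \<otimes> inv y = inv (y \<otimes> inv x)" using x y by (simp add: inv_mult_group)
      hence s1: "x \<otimes> inv y \<notin> H" using \<open>y \<otimes> inv x \<notin> H\<close> Hinv_iff[of "y \<otimes> inv x"] x y by simp
      have s3: "x \<otimes> y \<otimes> inv y = x" using x y by (simp add: m_assoc)
      show ?thesis
        by (rule half[OF x(1) y y yH]) (use s1 s3 x y H1 in simp)
    qed
  next
    case True
    show ?thesis
    proof (cases "x \<otimes> y \<otimes> inv x \<in> H")
      case True
      show ?thesis
        by (rule half[OF x(1) y x(1) x(2)]) (use \<open>y \<otimes> inv x \<in> H\<close> True H1 x in simp)
    next
      case False
      have xyH: "x \<otimes> y \<notin> H" using nB True by blast
      have yy: "y = (y \<otimes> inv x) \<otimes> x" using x y by (simp add: m_assoc)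
      have "(y \<otimes> inv (x \<otimes> y) \<in> H) = (x \<otimes> inv (x \<otimes> y) \<in> H)"
        using coset_left[OF True x(1) xy] yy by simp
      moreover have "x \<otimes> y \<otimes> inv (x \<otimes> y) \<in> H" using xy H1 by simp
      ultimately show ?thesis
        by (intro half[OF x(1) y xy xyH]) simp
    qed
  qed
qed


lemma conj_mult: "x \<in> carrier G \<Longrightarrow> a \<in> carrier G \<Longrightarrow> b \<in> carrier G \<Longrightarrow>
   x \<otimes> (a \<otimes> b) \<otimes> inv x = (x \<otimes> a \<otimes> inv x) \<otimes> (x \<otimes> b \<otimes> inv x)"
  by (simp add: m_assoc lcanc)

lemma good_half:
  assumes x: "x \<in> carrier G"
  shows "card {y \<in> carrier G. y \<in> H \<and> x \<otimes> y \<otimes> inv x \<in> H}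
     \<le> 2 * card {y \<in> carrier G. (y \<in> H \<and> x \<otimes> y \<otimes> inv x \<in> H) \<and> \<phi> y = \<phi> (x \<otimes> y \<otimes> inv x)}"
    (is "card ?A \<le> 2 * card ?Gd")
proof -
  have finA: "finite ?A" using fin by simp
  have sub1: "?Gd \<subseteq> ?A" by auto
  have cA: "card ?A = card ?Gd + card (?A - ?Gd)"
    using card_Diff_subset[OF finite_subset[OF sub1 finA] sub1] card_mono[OF finA sub1] by simp
  have "card (?A - ?Gd) \<le> card ?Gd"
  proof (cases "?A - ?Gd = {}")
    case True show ?thesis unfolding True by simp
  next
    case False
    then obtain y1 where y1: "y1 \<in> ?A - ?Gd" by blast
    have y1c: "y1 \<in> carrier G" "y1 \<in> H" "x \<otimes> y1 \<otimes> inv x \<in> H" using y1 by auto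
    have p1: "\<phi> y1 = - \<phi> (x \<otimes> y1 \<otimes> inv x)"
      using y1 phi_pm[of y1] phi_pm[of "x \<otimes> y1 \<otimes> inv x"] y1c by auto
    have "inj_on (\<lambda>y. y1 \<otimes> y) (?A - ?Gd)"
      by (rule inj_onI) (use y1c in auto)
    moreover have "(\<lambda>y. y1 \<otimes> y) ` (?A - ?Gd) \<subseteq> ?Gd"
    proof
      fix z assume "z \<in> (\<lambda>y. y1 \<otimes> y) ` (?A - ?Gd)"
      then obtain y where y: "y \<in> ?A - ?Gd" and z: "z = y1 \<otimes> y" by blast
      have yc: "y \<in> carrier G" "y \<in> H" "x \<otimes> y \<otimes> inv x \<in> H" using y by auto
      have p2: "\<phi> y = - \<phi> (x \<otimes> y \<otimes> inv x)"
        using y phi_pm[of y] phi_pm[of "x \<otimes> y \<otimes> inv x"] yc by auto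
      have cm: "x \<otimes> z \<otimes> inv x = (x \<otimes> y1 \<otimes> inv x) \<otimes> (x \<otimes> y \<otimes> inv x)"
        using conj_mult[OF x y1c(1) yc(1)] z by simp
      have "z \<in> H" using z Hm y1c yc by simp
      moreover have "x \<otimes> z \<otimes> inv x \<in> H" using cm Hm y1c yc by simp
      moreover have "\<phi> z = \<phi> (x \<otimes> z \<otimes> inv x)"
        using cm z phim[OF y1c(2) yc(2)] phim[OF y1c(3) yc(3)] p1 p2 by simp
      ultimately show "z \<in> ?Gd" using z y1c yc by simp
    qed
    ultimately show ?thesis using card_inj_on_le finite_subset[OF sub1 finA] by blast
  qed
  thus ?thesis using cA by simp
qed

lemma per_x:
  assumes x: "x \<in> carrier G" "x \<notin> H"
  shows "card FF * card (carrier G) \<le>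
     2 * (\<Sum>y\<in>carrier G. card {f \<in> FF. f x * f y = f (x \<otimes> y)})
     + card FF * card {y \<in> carrier G. x \<otimes> y \<in> H \<and> y \<otimes> inv x \<in> H}"
proof -
  define c where "c y = card {f \<in> FF. f x * f y = f (x \<otimes> y)}" for y
  define A where "A = {y \<in> carrier G. y \<in> H \<and> x \<otimes> y \<otimes> inv x \<in> H}"
  define B where "B = {y \<in> carrier G. x \<otimes> y \<in> H \<and> y \<otimes> inv x \<in> H}"
  define Gd where "Gd = {y \<in> carrier G. (y \<in> H \<and> x \<otimes> y \<otimes> inv x \<in> H) \<and> \<phi> y = \<phi> (x \<otimes> y \<otimes> inv x)}"
  define R where "R = carrier G - A - B"
  have AB: "A \<inter> B = {}"
  proof -
    { fix y assume "y \<in> A" "y \<in> B"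
      hence "y \<in> H" "x \<otimes> y \<in> H" "y \<in> carrier G" unfolding A_def B_def by auto
      hence "x \<otimes> y \<otimes> inv y \<in> H" using Hm Hi by blast
      hence "x \<in> H" using x \<open>y \<in> carrier G\<close> by (simp add: m_assoc)
      hence False using x by simp }
    thus ?thesis by blast
  qed
  have fA: "finite A" "finite B" "finite R" using fin unfolding A_def B_def R_def by auto
  have cu: "carrier G = A \<union> B \<union> R" unfolding A_def B_def R_def by auto
  have dj: "(A \<union> B) \<inter> R = {}" unfolding R_def by auto
  have sumsplit: "(\<Sum>y\<in>carrier G. c y) = sum c A + sum c B + sum c R"
    using cu dj AB fA by (simp add: sum.union_disjoint)
  have cardsplit: "card (carrier G) = card A + card B + card R"
    using cu dj AB fA by (simp add: card_Un_disjoint)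
  have sA: "sum c A = card FF * card Gd"
  proof -
    have "sum c A = (\<Sum>y\<in>A. if \<phi> y = \<phi> (x \<otimes> y \<otimes> inv x) then card FF else 0)"
    proof (rule sum.cong)
      fix y assume "y \<in> A"
      thus "c y = (if \<phi> y = \<phi> (x \<otimes> y \<otimes> inv x) then card FF else 0)"
        unfolding c_def A_def using caseA[OF x(1), of y] by auto
    qed simp
    also have "\<dots> = card FF * card {y \<in> A. \<phi> y = \<phi> (x \<otimes> y \<otimes> inv x)}"
      using fA(1) by (simp add: sum.If_cases Int_def)
    also have "{y \<in> A. \<phi> y = \<phi> (x \<otimes> y \<otimes> inv x)} = Gd" unfolding A_def Gd_def by auto
    finally show ?thesis .
  qed
  have gh: "card A \<le> 2 * card Gd" using good_half[OF x(1)] unfolding A_def Gd_def .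
  have sR: "2 * sum c R = card FF * card R"
  proof -
    have "2 * sum c R = (\<Sum>y\<in>R. 2 * c y)" by (simp add: sum_distrib_left)
    also have "\<dots> = (\<Sum>y\<in>R. card FF)"
      by (rule sum.cong) (auto simp: R_def A_def B_def c_def intro!: caseR[OF x])
    finally show ?thesis by simp
  qed
  have "card FF * card A \<le> 2 * sum c A" using sA gh by simp
  hence "card FF * card (carrier G) \<le> 2 * sum c A + card FF * card B + 2 * sum c R"
    using cardsplit sR by (simp add: algebra_simps)
  also have "\<dots> \<le> 2 * (\<Sum>y\<in>carrier G. c y) + card FF * card B"
    using sumsplit by simp
  finally show ?thesis unfolding c_def B_def .
qed


lemma conj_set: "x \<in> carrier G \<Longrightarrow> x <# H #> inv x = (\<lambda>h. x \<otimes> h \<otimes> inv x) ` H"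
  unfolding l_coset_def r_coset_def by auto

lemma in_normalizer:
  assumes x: "x \<in> carrier G" and k: "\<forall>h\<in>H. x \<otimes> h \<otimes> inv x \<in> H"
  shows "x \<in> normalizer G H"
proof -
  have sub1: "(\<lambda>h. x \<otimes> h \<otimes> inv x) ` H \<subseteq> H" using k by auto
  have inj: "inj_on (\<lambda>h. x \<otimes> h \<otimes> inv x) H"
    by (rule inj_onI) (use x Hc in simp)
  have "card ((\<lambda>h. x \<otimes> h \<otimes> inv x) ` H) = card H" using card_image[OF inj] .
  hence "(\<lambda>h. x \<otimes> h \<otimes> inv x) ` H = H" using card_subset_eq[OF Hfin sub1] by simp
  hence e: "x <# H #> inv x = H" using conj_set[OF x] by simp
  have HC: "H \<subseteq> carrier G" using Hc by blast
  show ?thesis unfolding normalizer_def stabilizer_def using x e HC by simp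
qed

lemma norm_carrier: "normalizer G H \<subseteq> carrier G"
  unfolding normalizer_def stabilizer_def by auto

lemma H_norm: "H \<subseteq> normalizer G H"
proof
  fix h assume h: "h \<in> H"
  show "h \<in> normalizer G H"
    by (rule in_normalizer) (use h Hc Hm Hi in simp_all)
qed

lemma beta_le:
  assumes x: "x \<in> carrier G"
  shows "card {y \<in> carrier G. x \<otimes> y \<in> H \<and> y \<otimes> inv x \<in> H} \<le> card H"
proof -
  have "inj_on (\<lambda>y. x \<otimes> y) {y \<in> carrier G. x \<otimes> y \<in> H \<and> y \<otimes> inv x \<in> H}"
    by (rule inj_onI) (use x in simp)
  moreover have "(\<lambda>y. x \<otimes> y) ` {y \<in> carrier G. x \<otimes> y \<in> H \<and> y \<otimes> inv x \<in> H} \<subseteq> H" by auto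
  ultimately show ?thesis using card_inj_on_le Hfin by blast
qed

lemma beta_half:
  assumes x: "x \<in> carrier G" and xn: "x \<notin> normalizer G H"
  shows "2 * card {y \<in> carrier G. x \<otimes> y \<in> H \<and> y \<otimes> inv x \<in> H} \<le> card H"
proof -
  define B where "B = {y \<in> carrier G. x \<otimes> y \<in> H \<and> y \<otimes> inv x \<in> H}"
  define K where "K = {k \<in> H. x \<otimes> k \<otimes> inv x \<in> H}"
  have KH: "K \<subseteq> H" unfolding K_def by auto
  have finK: "finite K" using finite_subset[OF KH Hfin] .
  have "K \<noteq> H" using in_normalizer[OF x] xn unfolding K_def by auto
  then obtain h1 where h1: "h1 \<in> H" "h1 \<notin> K" using KH by blast
  have cK: "card K \<le> card (H - K)"
  proof -
    have KC: "K \<subseteq> carrier G" using KH Hc by blast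
    have h1c: "h1 \<in> carrier G" using Hc h1 by simp
    have "inj_on (\<lambda>k. h1 \<otimes> k) K"
    proof (rule inj_onI)
      fix a b assume ab: "a \<in> K" "b \<in> K" "h1 \<otimes> a = h1 \<otimes> b"
      have ac: "a \<in> carrier G" "b \<in> carrier G" using ab KC by auto
      have "a = inv h1 \<otimes> (h1 \<otimes> a)" using lcanc[OF h1c ac(1)] by simp
      also have "\<dots> = inv h1 \<otimes> (h1 \<otimes> b)" using ab(3) by simp
      also have "\<dots> = b" using lcanc[OF h1c ac(2)] .
      finally show "a = b" .
    qed
    moreover have "(\<lambda>k. h1 \<otimes> k) ` K \<subseteq> H - K"
    proof
      fix z assume "z \<in> (\<lambda>k. h1 \<otimes> k) ` K"
      then obtain k where k: "k \<in> K" and z: "z = h1 \<otimes> k" by blast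
      have kk: "k \<in> H" "x \<otimes> k \<otimes> inv x \<in> H" using k unfolding K_def by auto
      have zH: "z \<in> H" using z Hm h1 kk by simp
      have "z \<notin> K"
      proof
        assume "z \<in> K"
        hence zz: "x \<otimes> z \<otimes> inv x \<in> H" unfolding K_def by auto
        have "h1 = z \<otimes> inv k" using z Hc[OF h1(1)] Hc[OF kk(1)] by (simp add: m_assoc)
        hence "x \<otimes> h1 \<otimes> inv x = (x \<otimes> z \<otimes> inv x) \<otimes> (x \<otimes> inv k \<otimes> inv x)"
          using conj_mult[OF x Hc[OF zH] inv_closed[OF Hc[OF kk(1)]]] by simp
        moreover have "x \<otimes> inv k \<otimes> inv x = inv (x \<otimes> k \<otimes> inv x)"
          using x Hc[OF kk(1)] by (simp add: inv_mult_group m_assoc)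
        ultimately have "x \<otimes> h1 \<otimes> inv x \<in> H" using zz kk Hm Hi by simp
        thus False using h1 unfolding K_def by auto
      qed
      thus "z \<in> H - K" using zH by simp
    qed
    ultimately show ?thesis using card_inj_on_le[of "\<lambda>k. h1 \<otimes> k" K "H - K"] Hfin by blast
  qed
  hence K2: "2 * card K \<le> card H" using card_Diff_subset[OF finK KH] card_mono[OF Hfin KH] by simp
  have "card B \<le> card K"
  proof (cases "B = {}")
    case True show ?thesis unfolding True by simp
  next
    case False
    then obtain y0 where y0: "y0 \<in> B" by blast
    have y0c: "y0 \<in> carrier G" "x \<otimes> y0 \<in> H" "y0 \<otimes> inv x \<in> H" using y0 unfolding B_def by auto
    have "inj_on (\<lambda>y. y \<otimes> inv y0) B"
      by (rule inj_onI) (use y0c in \<open>auto simp: B_def\<close>)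
    moreover have "(\<lambda>y. y \<otimes> inv y0) ` B \<subseteq> K"
    proof
      fix z assume "z \<in> (\<lambda>y. y \<otimes> inv y0) ` B"
      then obtain y where y: "y \<in> B" and z: "z = y \<otimes> inv y0" by blast
      have yc: "y \<in> carrier G" "x \<otimes> y \<in> H" "y \<otimes> inv x \<in> H" using y unfolding B_def by auto
      have "z = (y \<otimes> inv x) \<otimes> inv (y0 \<otimes> inv x)"
        using z yc y0c x by (simp add: inv_mult_group m_assoc lcanc)
      hence "z \<in> H" using yc y0c Hm Hi by simp
      moreover have "x \<otimes> z \<otimes> inv x = (x \<otimes> y) \<otimes> inv (x \<otimes> y0)"
        using z yc y0c x by (simp add: inv_mult_group m_assoc)
      hence "x \<otimes> z \<otimes> inv x \<in> H" using yc y0c Hm Hi by simp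
      ultimately show "z \<in> K" unfolding K_def by simp
    qed
    ultimately show ?thesis using card_inj_on_le finK by blast
  qed
  thus ?thesis using K2 unfolding B_def by simp
qed


definition cosx :: "'a \<Rightarrow> 'a set" where "cosx z = {g \<in> carrier G. z \<otimes> inv g \<in> H}"
definition rep :: "'a \<Rightarrow> 'a" where "rep z = (if z \<in> H then \<one> else (SOME g. g \<in> cosx z))"

lemma rep_prop: "z \<in> carrier G \<Longrightarrow> rep z \<in> carrier G \<and> z \<otimes> inv (rep z) \<in> H"
proof (cases "z \<in> H")
  case True
  assume "z \<in> carrier G" thus ?thesis using True unfolding rep_def by simp
next
  case False
  assume z: "z \<in> carrier G"
  have "z \<in> cosx z" using z H1 unfolding cosx_def by simp
  hence "(SOME g. g \<in> cosx z) \<in> cosx z" by (rule someI)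
  thus ?thesis using False unfolding rep_def cosx_def by simp
qed

lemma rep_left: assumes h: "h \<in> H" and z: "z \<in> carrier G" shows "rep (h \<otimes> z) = rep z"
proof -
  have "(h \<otimes> z \<in> H) = (z \<in> H)"
    using coset_left[OF h z one_closed] z Hc[OF h] by simp
  moreover have "cosx (h \<otimes> z) = cosx z" unfolding cosx_def using coset_left[OF h z] by auto
  ultimately show ?thesis unfolding rep_def by simp
qed

lemma FF_ne: "FF \<noteq> {}"
proof -
  define f0 where "f0 = (\<lambda>z\<in>carrier G. \<phi> (z \<otimes> inv (rep z)))"
  have 1: "f0 \<in> carrier G \<rightarrow>\<^sub>E {1,-1}" unfolding f0_def using rep_prop phival by auto
  have "rep \<one> = \<one>" unfolding rep_def using H1 by simp
  hence 2: "f0 \<one> = 1" unfolding f0_def using phi1 by simp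
  have 3: "f0 (h \<otimes> z) = \<phi> h * f0 z" if h: "h \<in> H" and z: "z \<in> carrier G" for h z
  proof -
    have hc: "h \<in> carrier G" using Hc h .
    have "f0 (h \<otimes> z) = \<phi> (h \<otimes> z \<otimes> inv (rep z))" unfolding f0_def using rep_left[OF h z] hc z by simp
    also have "\<dots> = \<phi> (h \<otimes> (z \<otimes> inv (rep z)))" using hc z rep_prop[OF z] by (simp add: m_assoc)
    also have "\<dots> = \<phi> h * \<phi> (z \<otimes> inv (rep z))" using phim[OF h] rep_prop[OF z] by simp
    finally show ?thesis unfolding f0_def using z by simp
  qed
  have "f0 \<in> FF" unfolding FF_def using 1 2 3 by blast
  thus ?thesis by blast
qed

lemma FF_sum0:
  assumes f: "f \<in> FF" shows "(\<Sum>x\<in>carrier G. f x) = 0"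
proof -
  obtain h0 where h0: "h0 \<in> H" "\<phi> h0 \<noteq> 1" using nontriv by blast
  have p: "\<phi> h0 = -1" using phi_pm[OF h0(1)] h0(2) by simp
  have h0c: "h0 \<in> carrier G" using Hc h0(1) .
  have "(\<Sum>x\<in>carrier G. f (h0 \<otimes> x)) = (\<Sum>x\<in>carrier G. f x)"
    by (rule sum.reindex_bij_witness[where i="\<lambda>x. inv h0 \<otimes> x" and j="\<lambda>x. h0 \<otimes> x"])
       (use h0c lcanc rcanc in simp_all)
  moreover have "(\<Sum>x\<in>carrier G. f (h0 \<otimes> x)) = (\<Sum>x\<in>carrier G. - f x)"
    by (rule sum.cong) (use FF_mul[OF f h0(1)] p in simp_all)
  ultimately show ?thesis by (simp add: sum_negf)
qed

lemma card_filter_sum: "finite A \<Longrightarrow> card {a \<in> A. P a} = (\<Sum>a\<in>A. if P a then 1 else 0)"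
  by (simp add: sum.If_cases Int_def)


lemma main:
  "\<exists>f\<in>FF. real (card {(x, y). x \<in> carrier G \<and> y \<in> carrier G \<and> f x * f y = f (x \<otimes> y)})
          / real (card (carrier G)) ^ 2
        \<ge> (1 / 2) * (1 + (1 / 2) * (real (card H) / real (card (carrier G)))
              * (1 - real (card (normalizer G H)) / real (card (carrier G)))
            + real (card H) ^ 2 / real (card (carrier G)) ^ 2)"
proof -
  define n where "n = card (carrier G)"
  define m where "m = card H"
  define N where "N = card (normalizer G H)"
  define k where "k = card FF"
  define c where "c x y = card {f \<in> FF. f x * f y = f (x \<otimes> y)}" for x y
  define \<beta> where "\<beta> x = card {y \<in> carrier G. x \<otimes> y \<in> H \<and> y \<otimes> inv x \<in> H}" for x
  define S where "S = (\<Sum>x\<in>carrier G. \<Sum>y\<in>carrier G. c x y)"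
  define Ag where "Ag f = {(x, y). x \<in> carrier G \<and> y \<in> carrier G \<and> f x * f y = f (x \<otimes> y)}" for f :: "'a \<Rightarrow> int"
  have HC: "H \<subseteq> carrier G" using Hc by blast
  have NC: "normalizer G H \<subseteq> carrier G" by (rule norm_carrier)
  have HN: "H \<subseteq> normalizer G H" by (rule H_norm)
  have finN: "finite (normalizer G H)" using finite_subset[OF NC fin] .
  have mn: "m \<le> N" "N \<le> n" unfolding m_def N_def n_def
    using card_mono[OF finN HN] card_mono[OF fin NC] by auto
  have k0: "k > 0" unfolding k_def using FF_ne FF_fin card_gt_0_iff by blast
  have n0: "n > 0" unfolding n_def using fin card_gt_0_iff by blast
  have s1: "k * (n * n + m * n) \<le> 2 * S + k * (\<Sum>x\<in>carrier G - H. \<beta> x)"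
  proof -
    have split: "S = (\<Sum>x\<in>carrier G - H. \<Sum>y\<in>carrier G. c x y) + (\<Sum>x\<in>H. \<Sum>y\<in>carrier G. c x y)"
      unfolding S_def using sum.subset_diff[OF HC fin] by simp
    have sH: "(\<Sum>x\<in>H. \<Sum>y\<in>carrier G. c x y) = m * (n * k)"
    proof -
      have "(\<Sum>x\<in>H. \<Sum>y\<in>carrier G. c x y) = (\<Sum>x\<in>H. \<Sum>y\<in>carrier G. k)"
        unfolding c_def k_def by (intro sum.cong refl) (simp add: caseH)
      thus ?thesis unfolding m_def n_def by simp
    qed
    have "(\<Sum>x\<in>carrier G - H. k * n) \<le> (\<Sum>x\<in>carrier G - H. 2 * (\<Sum>y\<in>carrier G. c x y) + k * \<beta> x)"
      by (rule sum_mono) (use per_x in \<open>simp add: c_def k_def n_def \<beta>_def\<close>)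
    also have "\<dots> = 2 * (\<Sum>x\<in>carrier G - H. \<Sum>y\<in>carrier G. c x y) + k * (\<Sum>x\<in>carrier G - H. \<beta> x)"
      by (simp add: sum.distrib sum_distrib_left)
    finally have a: "k * n * (n - m) \<le> 2 * (\<Sum>x\<in>carrier G - H. \<Sum>y\<in>carrier G. c x y) + k * (\<Sum>x\<in>carrier G - H. \<beta> x)"
      using card_Diff_subset[OF Hfin HC] unfolding m_def n_def by (simp add: ac_simps)
    have "k * (n * n + m * n) = k * n * (n - m) + 2 * (m * (n * k))"
      using mn by (simp add: algebra_simps diff_mult_distrib2)
    thus ?thesis using a split sH by simp
  qed
  have s2: "2 * (\<Sum>x\<in>carrier G - H. \<beta> x) \<le> 2 * (m * (N - m)) + m * (n - N)"
  proof -
    have u: "carrier G - H = (normalizer G H - H) \<union> (carrier G - normalizer G H)" using NC HN by blast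
    have d: "(normalizer G H - H) \<inter> (carrier G - normalizer G H) = {}" by blast
    have "(\<Sum>x\<in>carrier G - H. \<beta> x) = (\<Sum>x\<in>normalizer G H - H. \<beta> x) + (\<Sum>x\<in>carrier G - normalizer G H. \<beta> x)"
      unfolding u using d finN fin by (simp add: sum.union_disjoint)
    moreover have A: "(\<Sum>x\<in>normalizer G H - H. \<beta> x) \<le> (\<Sum>x\<in>normalizer G H - H. m)"
      by (rule sum_mono) (use NC beta_le in \<open>auto simp: \<beta>_def m_def\<close>)
    moreover have B: "(\<Sum>x\<in>carrier G - normalizer G H. 2 * \<beta> x) \<le> (\<Sum>x\<in>carrier G - normalizer G H. m)"
      by (rule sum_mono) (use beta_half in \<open>auto simp: \<beta>_def m_def\<close>)
    moreover have "card (normalizer G H - H) = N - m" using card_Diff_subset[OF Hfin HN] unfolding N_def m_def .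
    moreover have "card (carrier G - normalizer G H) = n - N" using card_Diff_subset[OF finN NC] unfolding N_def n_def .
    moreover have "(\<Sum>x\<in>carrier G - normalizer G H. 2 * \<beta> x) = 2 * (\<Sum>x\<in>carrier G - normalizer G H. \<beta> x)"
      by (simp add: sum_distrib_left)
    ultimately have "(\<Sum>x\<in>carrier G - H. \<beta> x) = (\<Sum>x\<in>normalizer G H - H. \<beta> x) + (\<Sum>x\<in>carrier G - normalizer G H. \<beta> x)"
       "(\<Sum>x\<in>normalizer G H - H. \<beta> x) \<le> m * (N - m)"
       "2 * (\<Sum>x\<in>carrier G - normalizer G H. \<beta> x) \<le> m * (n - N)"
      by (simp_all add: mult.commute)
    thus ?thesis by linarith
  qed
  have s3: "S = (\<Sum>f\<in>FF. card (Ag f))"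
  proof -
    have "card (Ag f) = (\<Sum>x\<in>carrier G. \<Sum>y\<in>carrier G. if f x * f y = f (x \<otimes> y) then 1 else 0)" for f
    proof -
      have "Ag f = {p \<in> carrier G \<times> carrier G. f (fst p) * f (snd p) = f (fst p \<otimes> snd p)}"
        unfolding Ag_def by auto
      hence "card (Ag f) = (\<Sum>p\<in>carrier G \<times> carrier G. if f (fst p) * f (snd p) = f (fst p \<otimes> snd p) then 1 else 0)"
        using card_filter_sum[OF finite_cartesian_product[OF fin fin]] by simp
      also have "\<dots> = (\<Sum>x\<in>carrier G. \<Sum>y\<in>carrier G. if f x * f y = f (x \<otimes> y) then 1 else 0)"
        by (simp add: sum.cartesian_product case_prod_beta)
      finally show ?thesis .
    qed
    hence "(\<Sum>f\<in>FF. card (Ag f)) = (\<Sum>f\<in>FF. \<Sum>x\<in>carrier G. \<Sum>y\<in>carrier G. if f x * f y = f (x \<otimes> y) then 1 else 0)"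
      by simp
    also have "\<dots> = (\<Sum>x\<in>carrier G. \<Sum>f\<in>FF. \<Sum>y\<in>carrier G. if f x * f y = f (x \<otimes> y) then 1 else 0)"
      by (rule sum.swap)
    also have "\<dots> = (\<Sum>x\<in>carrier G. \<Sum>y\<in>carrier G. \<Sum>f\<in>FF. if f x * f y = f (x \<otimes> y) then 1 else 0)"
      by (rule sum.cong[OF refl], rule sum.swap)
    also have "\<dots> = S" unfolding S_def c_def using card_filter_sum[OF FF_fin] by simp
    finally show ?thesis by simp
  qed
  obtain f where f: "f \<in> FF" "S \<le> k * card (Ag f)"
  proof (rule ccontr)
    assume "\<not> thesis"
    hence lt: "\<forall>f\<in>FF. k * card (Ag f) < S" using that by force
    have "(\<Sum>f\<in>FF. k * card (Ag f)) < (\<Sum>f\<in>FF. S)"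
      by (rule sum_strict_mono[OF FF_fin FF_ne]) (use lt in simp)
    thus False using s3 unfolding k_def by (simp add: sum_distrib_left[symmetric])
  qed
  let ?a = "real (card (Ag f))"
  define B where "B = (\<Sum>x\<in>carrier G - H. \<beta> x)"
  have r1: "real k * (real n * real n + real m * real n) \<le> 2 * real S + real k * real B"
  proof -
    have "real (k * (n * n + m * n)) \<le> real (2 * S + k * B)" using s1 unfolding B_def of_nat_le_iff .
    thus ?thesis by simp
  qed
  have r2: "2 * real B \<le> 2 * (real m * (real N - real m)) + real m * (real n - real N)"
  proof -
    have "real (2 * B) \<le> real (2 * (m * (N - m)) + m * (n - N))" using s2 unfolding B_def by linarith
    thus ?thesis using mn by (simp add: of_nat_diff)
  qed
  have r4: "real S \<le> real k * ?a"
  proof -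
    have "real S \<le> real (k * card (Ag f))" using f(2) unfolding of_nat_le_iff .
    thus ?thesis by simp
  qed
  have key: "4 * ?a \<ge> 2 * real n * real n + real m * real n - real m * real N + 2 * real m * real m"
  proof -
    have "real k * (real n * real n + real m * real n) \<le> real k * (2 * ?a + real B)"
      using r1 r4 by (simp add: algebra_simps)
    hence "real n * real n + real m * real n \<le> 2 * ?a + real B"
      using k0 by (simp add: mult_le_cancel_left_pos)
    thus ?thesis using r2 by (simp add: algebra_simps)
  qed
  have "(1 / 2) * (1 + (1 / 2) * (real m / real n) * (1 - real N / real n) + real m ^ 2 / real n ^ 2)
      \<le> ?a / real n ^ 2"
  proof -
    have nn: "real n > 0" using n0 by simp
    have "(1 / 2) * (1 + (1 / 2) * (real m / real n) * (1 - real N / real n) + real m ^ 2 / real n ^ 2)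
       = (2 * real n * real n + real m * real n - real m * real N + 2 * real m * real m) / (4 * (real n * real n))"
      using nn by (simp add: field_simps power2_eq_square)
    also have "\<dots> \<le> (4 * ?a) / (4 * (real n * real n))"
      by (rule divide_right_mono[OF key]) simp
    also have "\<dots> = ?a / real n ^ 2" by (simp add: power2_eq_square)
    finally show ?thesis .
  qed
  thus ?thesis using f(1) unfolding Ag_def n_def m_def N_def by blast
qed

end

theorem theorem3:
  fixes G (structure) and H :: "'a set" and \<phi> :: "'a \<Rightarrow> int"
  assumes "group G" and "finite (carrier G)" and "subgroup H G"
    and "\<forall>h\<in>H. \<phi> h \<in> {1, -1}"
    and "\<forall>h1\<in>H. \<forall>h2\<in>H. \<phi> (h1 \<otimes> h2) = \<phi> h1 * \<phi> h2"
    and "\<exists>h\<in>H. \<phi> h \<noteq> 1"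
  shows "\<exists>f :: 'a \<Rightarrow> int. (\<forall>x\<in>carrier G. f x \<in> {1, -1})
      \<and> (\<Sum>x\<in>carrier G. f x) = 0
      \<and> real (card {(x, y). x \<in> carrier G \<and> y \<in> carrier G \<and> f x * f y = f (x \<otimes> y)})
          / real (card (carrier G)) ^ 2
        \<ge> (1 / 2) * (1 + (1 / 2) * (real (card H) / real (card (carrier G)))
              * (1 - real (card (normalizer G H)) / real (card (carrier G)))
            + real (card H) ^ 2 / real (card (carrier G)) ^ 2)"
proof -
  interpret T: thm3 G H \<phi>
    by (rule thm3.intro[OF assms(1)], rule thm3_axioms.intro) (use assms in auto)
  obtain f where f: "f \<in> T.FF" and ineq:
    "real (card {(x, y). x \<in> carrier G \<and> y \<in> carrier G \<and> f x * f y = f (x \<otimes> y)})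
          / real (card (carrier G)) ^ 2
        \<ge> (1 / 2) * (1 + (1 / 2) * (real (card H) / real (card (carrier G)))
              * (1 - real (card (normalizer G H)) / real (card (carrier G)))
            + real (card H) ^ 2 / real (card (carrier G)) ^ 2)"
    using T.main by blast
  have "\<forall>x\<in>carrier G. f x \<in> {1, -1}" using T.FF_val[OF f] by auto
  moreover have "(\<Sum>x\<in>carrier G. f x) = 0" using T.FF_sum0[OF f] .
  ultimately show ?thesis using ineq by blast
qed

end
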